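(* Let $q\ge 2$ and $n\ge 1$ be integers. Then: (i) $I_q(n,2)=q^n$ and $I_q(n,2n)=q$. (ii) For every even integer $d$ with $4\le d\le 2n-2$, one has $I_q(n,d)\le \frac12\left(q^{\,n-\frac d2+1}+q^{\,n-\frac d2}\right)$. (iii) For every even integer $d$ with $2q\le d\le 2n-2$, one has $I_q(n,d)\le q^{\,n-\frac d2}$.
   Context: $[q]=\{1,\dots,q\}$ and $[q]^n$ is the set of words of length $n$ over $[q]$; a $q$-ary code of length $n$ is a subset of $[q]^n$ with at least two elements. For $\mathbf u,\mathbf v\in[q]^n$, $\ell_{\rm LCS}(\mathbf u,\mathbf v)$ is the length of a longest common subsequence of $\mathbf u$ and $\mathbf v$, and the insdel distance $d_I(\mathbf u,\mathbf v)$ is the minimum number of insertions and deletions of symbols transforming $\mathbf u$ into $\mathbf v$; equivalently $d_I(\mathbf u,\mathbf v)=2n-2\ell_{\rm LCS}(\mathbf u,\mathbf v)$. The insdel distance $d_I(\mathcal C)$ of a code $\mathcal C$ is the minimum of $d_I(\mathbf u,\mathbf v)$ over distinct $\mathbf u,\mathbf v\in\mathcal C$. $I_q(n,d)$ denotes the largest size $M$ of a code $\mathcal C\subseteq[q]^n$ with $d_I(\mathcal C)\ge d$. *)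

theory Defs
  imports Complex_Main "HOL-Library.Sublist"
begin

definition words :: "nat \<Rightarrow> nat \<Rightarrow> nat list set" where
  "words q n = {w. length w = n \<and> set w \<subseteq> {1..q}}"

definition lcs_len :: "'a list \<Rightarrow> 'a list \<Rightarrow> nat" where
  "lcs_len u v = Max (length ` {w. subseq w u \<and> subseq w v})"

text \<open>Insdel distance, via d_I(u,v) = |u| + |v| - 2 LCS(u,v) (= 2n - 2 LCS for words of length n).\<close>
definition insdel_dist :: "'a list \<Rightarrow> 'a list \<Rightarrow> nat" where
  "insdel_dist u v = length u + length v - 2 * lcs_len u v"

definition code_insdel_dist :: "'a list set \<Rightarrow> nat" where
  "code_insdel_dist C = Min {insdel_dist u v | u v. u \<in> C \<and> v \<in> C \<and> u \<noteq> v}"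

definition I_q :: "nat \<Rightarrow> nat \<Rightarrow> nat \<Rightarrow> nat" where
  "I_q q n d = Max {card C | C. C \<subseteq> words q n \<and> 2 \<le> card C \<and> d \<le> code_insdel_dist C}"

end

theory Submission imports Defs begin

lemma fin_cs: "finite {w. subseq w u \<and> subseq w v}"
proof -
  have "finite {w. subseq w u}" by (metis List.finite_set set_subseqs_eq)
  then show ?thesis by (rule finite_subset[rotated]) auto
qed

lemma lcs_ge: "subseq w u \<Longrightarrow> subseq w v \<Longrightarrow> length w \<le> lcs_len u v"
  unfolding lcs_len_def by (rule Max_ge) (use fin_cs in auto)

lemma lcs_wit: "\<exists>w. subseq w u \<and> subseq w v \<and> length w = lcs_len u v"
proof -
  have "lcs_len u v \<in> length ` {w. subseq w u \<and> subseq w v}"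
    unfolding lcs_len_def by (rule Max_in) (use fin_cs in \<open>auto intro!: exI[of _ "[]"]\<close>)
  then show ?thesis by auto
qed

lemma lcs_le_len: "lcs_len u v \<le> length u"
  using lcs_wit[of u v] list_emb_length by metis

lemma lcs_Cons: "lcs_len x y + 1 \<le> lcs_len (a#x) (a#y)"
proof -
  obtain w where "subseq w x" "subseq w y" "length w = lcs_len x y" using lcs_wit by blast
  then show ?thesis using lcs_ge[of "a#w" "a#x" "a#y"] by auto
qed

lemma finite_words: "finite (words q n)"
  unfolding words_def by (rule finite_subset[of _ "{xs. set xs \<subseteq> {1..q} \<and> length xs \<le> n}"]) 
    (auto intro: finite_lists_length_le)

lemma card_words: "card (words q n) = q ^ n"
  unfolding words_def using card_lists_length_eq[of "{1..q}" n] by (simp add: conj_commute)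

definition lcsb :: "nat list set \<Rightarrow> nat \<Rightarrow> bool" where
  "lcsb C m \<longleftrightarrow> (\<forall>u\<in>C. \<forall>v\<in>C. u \<noteq> v \<longrightarrow> lcs_len u v \<le> m)"

lemma words_Suc_hd: "u \<in> words q (Suc n) \<Longrightarrow> u = hd u # tl u \<and> hd u \<in> {1..q} \<and> tl u \<in> words q n"
  unfolding words_def by (cases u) auto

lemma reduce:
  assumes base: "\<And>C. C \<subseteq> words q L \<Longrightarrow> lcsb C m \<Longrightarrow> card C \<le> B"
  shows "C \<subseteq> words q (L + j) \<Longrightarrow> lcsb C (m + j) \<Longrightarrow> card C \<le> q^j * B"
proof (induction j arbitrary: C)
  case 0 then show ?case using base by simp
next
  case (Suc j)
  define Ca where "Ca a = {u\<in>C. hd u = a}" for a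
  have fC: "finite C" using Suc.prems(1) finite_words finite_subset by blast
  have C_eq: "C = (\<Union>a\<in>{1..q}. Ca a)"
    using Suc.prems(1) words_Suc_hd[of _ q "L + j"] unfolding Ca_def by auto
  have cardCa: "card (Ca a) \<le> q^j * B" for a
  proof -
    have inj: "inj_on tl (Ca a)"
    proof (rule inj_onI)
      fix u v assume "u \<in> Ca a" "v \<in> Ca a" "tl u = tl v"
      then show "u = v" using Suc.prems(1) words_Suc_hd[of _ q "L + j"] unfolding Ca_def
        by (metis (mono_tags, lifting) add_Suc_right mem_Collect_eq subsetD)
    qed
    have sub: "tl ` Ca a \<subseteq> words q (L + j)"
      using Suc.prems(1) words_Suc_hd[of _ q "L + j"] unfolding Ca_def by auto
    have lb: "lcsb (tl ` Ca a) (m + j)"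
      unfolding lcsb_def
    proof (intro ballI impI)
      fix x y assume "x \<in> tl ` Ca a" "y \<in> tl ` Ca a" "x \<noteq> y"
      then obtain u v where uv: "u \<in> Ca a" "v \<in> Ca a" "x = tl u" "y = tl v" "u \<noteq> v" by auto
      then have "u = a # x" "v = a # y"
        using Suc.prems(1) words_Suc_hd[of _ q "L + j"] unfolding Ca_def
        by (metis (mono_tags, lifting) add_Suc_right mem_Collect_eq subsetD)+
      moreover have "lcs_len u v \<le> m + Suc j"
        using Suc.prems(2) uv unfolding lcsb_def Ca_def by auto
      ultimately show "lcs_len x y \<le> m + j" using lcs_Cons[of x y a] by simp
    qed
    have "card (Ca a) = card (tl ` Ca a)" using card_image[OF inj] by simp
    also have "\<dots> \<le> q^j * B" using Suc.IH[OF sub lb] .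
    finally show ?thesis .
  qed
  have "card C \<le> (\<Sum>a\<in>{1..q}. card (Ca a))"
    by (subst C_eq) (rule card_UN_le, simp)
  also have "\<dots> \<le> (\<Sum>a\<in>{1..q}. q^j * B)" by (rule sum_mono) (use cardCa in auto)
  also have "\<dots> = q^Suc j * B" by simp
  finally show ?case .
qed

lemma sub2: "i < j \<Longrightarrow> j < length u \<Longrightarrow> subseq [u!i, u!j] u"
proof (induction u arbitrary: i j)
  case Nil then show ?case by simp
next
  case (Cons x xs)
  show ?case
  proof (cases i)
    case 0
    then obtain j' where "j = Suc j'" using Cons.prems by (cases j) auto
    then have "subseq [xs!j'] xs" using Cons.prems by (simp add: subseq_singleton_left)
    then show ?thesis using 0 \<open>j = Suc j'\<close> by simp
  next
    case (Suc i')
    then obtain j' where "j = Suc j'" using Cons.prems by (cases j) auto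
    then have "subseq [xs!i', xs!j'] xs" using Cons.prems Suc by (intro Cons.IH) auto
    then show ?thesis using Suc \<open>j = Suc j'\<close> using list_emb.list_emb_Cons[of "(=)" "[xs!i', xs!j']" xs x] by simp
  qed
qed

lemma words_nth: "u \<in> words q L \<Longrightarrow> i < L \<Longrightarrow> u!i \<in> {1..q}"
  unfolding words_def using nth_mem by blast

lemma pair_words: "u \<in> words q L \<Longrightarrow> i < L \<Longrightarrow> j < L \<Longrightarrow> [u!i, u!j] \<in> words q 2"
  using words_nth[of u q L] unfolding words_def by auto

lemma base_zero:
  assumes "C \<subseteq> words q L" "1 \<le> L" "lcsb C 0"
  shows "card C \<le> q"
proof -
  have "inj_on hd C"
  proof (rule inj_onI, rule ccontr)
    fix u v assume uv: "u \<in> C" "v \<in> C" "hd u = hd v" "u \<noteq> v"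
    have "u \<noteq> []" "v \<noteq> []" using uv assms(1,2) unfolding words_def by auto
    then have "subseq [hd u] u" "subseq [hd u] v" using uv hd_in_set[of u] hd_in_set[of v]
      by (simp_all add: subseq_singleton_left)
    then have "1 \<le> lcs_len u v" using lcs_ge[of "[hd u]" u v] by simp
    then show False using assms(3) uv unfolding lcsb_def by force
  qed
  moreover have "hd ` C \<subseteq> {1..q}"
  proof
    fix a assume "a \<in> hd ` C"
    then obtain u where "u \<in> C" "a = hd u" by auto
    moreover have "u \<noteq> []" "set u \<subseteq> {1..q}" using \<open>u \<in> C\<close> assms(1,2) unfolding words_def by auto
    ultimately show "a \<in> {1..q}" using hd_in_set[of u] by blast
  qed
  ultimately show ?thesis using card_inj_on_le[of hd C "{1..q}"] by simp
qed

lemma base_rep: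
  assumes "C \<subseteq> words q L" "q < L" "lcsb C 1"
  shows "card C \<le> q"
proof -
  have ex: "\<exists>a. a \<in> {1..q} \<and> subseq [a,a] u" if "u \<in> C" for u
  proof -
    have w: "length u = L" "set u \<subseteq> {1..q}" using that assms(1) unfolding words_def by auto
    have "card (set u) \<le> q" using card_mono[OF _ w(2)] by simp
    then have "\<not> distinct u" using w assms(2) distinct_card[of u] by auto
    then obtain xs ys zs y where "u = xs @ [y] @ ys @ [y] @ zs" using not_distinct_decomp by blast
    moreover have "subseq [y,y] (xs @ [y] @ ys @ [y] @ zs)"
    proof -
      have "subseq [y] (ys @ [y] @ zs)" by (simp add: subseq_singleton_left)
      then have "subseq [y,y] (y # (ys @ [y] @ zs))" by (rule subseq_Cons2)
      then show ?thesis by (simp add: subseq_drop_many)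
    qed
    ultimately show ?thesis using w(2) by auto
  qed
  define r where "r u = (SOME a. a \<in> {1..q} \<and> subseq [a,a] u)" for u
  have r: "r u \<in> {1..q} \<and> subseq [r u, r u] u" if "u \<in> C" for u
    unfolding r_def using someI_ex[OF ex[OF that]] .
  have "inj_on r C"
  proof (rule inj_onI, rule ccontr)
    fix u v assume uv: "u \<in> C" "v \<in> C" "r u = r v" "u \<noteq> v"
    then have "2 \<le> lcs_len u v" using r[of u] r[of v] lcs_ge[of "[r u, r u]" u v] by simp
    then show False using assms(3) uv unfolding lcsb_def by force
  qed
  moreover have "r ` C \<subseteq> {1..q}" using r by auto
  ultimately show ?thesis using card_inj_on_le[of r C "{1..q}"] by simp
qed

lemma two_le_card: "x \<in> S \<Longrightarrow> y \<in> S \<Longrightarrow> x \<noteq> y \<Longrightarrow> finite S \<Longrightarrow> 2 \<le> card S"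
  using card_mono[of S "{x,y}"] by auto

lemma base_pairs:
  assumes C: "C \<subseteq> words q L" and L: "3 \<le> L" and lb: "lcsb C 1"
  shows "2 * card C \<le> q^2 + q"
proof -
  define S where "S u = {w \<in> words q 2. subseq w u}" for u
  have fC: "finite C" using C finite_words finite_subset by blast
  have fS: "finite (S u)" for u unfolding S_def using finite_words by simp
  have inS: "[u!i, u!j] \<in> S u" if "u \<in> C" "i < j" "j < L" for u i j
  proof -
    have uw: "u \<in> words q L" using that C by auto
    then have "length u = L" unfolding words_def by simp
    then have "subseq [u!i, u!j] u" using sub2[of i j u] that by simp
    moreover have "[u!i, u!j] \<in> words q 2" using pair_words[OF uw, of i j] that by simp
    ultimately show ?thesis unfolding S_def by blast
  qed
  have disj: "S u \<inter> S v = {}" if "u \<in> C" "v \<in> C" "u \<noteq> v" for u v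
  proof (rule ccontr)
    assume "S u \<inter> S v \<noteq> {}"
    then obtain w where "w \<in> words q 2" "subseq w u" "subseq w v" unfolding S_def by auto
    then have "2 \<le> lcs_len u v" using lcs_ge[of w u v] unfolding words_def by auto
    then show False using lb that unfolding lcsb_def by force
  qed
  have sumS: "(\<Sum>u\<in>C. card (S u)) \<le> q^2"
  proof -
    have "(\<Sum>u\<in>C. card (S u)) = card (\<Union>u\<in>C. S u)"
      by (rule card_UN_disjoint[symmetric]) (use fC fS disj in blast)+
    also have "\<dots> \<le> card (words q 2)"
      by (rule card_mono) (simp add: finite_words, unfold S_def, blast)
    finally show ?thesis by (simp add: card_words)
  qed
  define C0 where "C0 = {u \<in> C. u = replicate L (hd u)}"
  have C0C: "C0 \<subseteq> C" unfolding C0_def by auto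
  have cardC0: "card C0 \<le> q"
  proof -
    have "inj_on hd C0"
    proof (rule inj_onI)
      fix x y assume "x \<in> C0" "y \<in> C0" "hd x = hd y"
      then have "x = replicate L (hd x)" "y = replicate L (hd y)" unfolding C0_def by auto
      then show "x = y" using \<open>hd x = hd y\<close> by simp
    qed
    moreover have "hd ` C0 \<subseteq> {1..q}"
    proof
      fix a assume "a \<in> hd ` C0"
      then obtain u where "u \<in> C" "a = hd u" unfolding C0_def by auto
      moreover have "u \<noteq> []" "set u \<subseteq> {1..q}" using \<open>u \<in> C\<close> C L unfolding words_def by auto
      ultimately show "a \<in> {1..q}" using hd_in_set[of u] by blast
    qed
    ultimately show ?thesis using card_inj_on_le[of hd C0 "{1..q}"] by simp
  qed
  have one: "1 \<le> card (S u)" if "u \<in> C" for u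
  proof -
    have "[u!0, u!1] \<in> S u" using inS[OF that, of 0 1] L by simp
    then have "S u \<noteq> {}" by auto
    then show ?thesis using fS[of u] by (simp add: Suc_le_eq card_gt_0_iff)
  qed
  have two: "2 \<le> card (S u)" if "u \<in> C - C0" for u
  proof -
    have uC: "u \<in> C" and nc: "u \<noteq> replicate L (hd u)" using that unfolding C0_def by auto
    have len: "length u = L" using uC C unfolding words_def by auto
    have hd0: "hd u = u!0" using len L hd_conv_nth[of u] by fastforce
    obtain j where j: "j < L" "u!j \<noteq> u!0"
    proof -
      have "\<exists>j<L. u!j \<noteq> u!0"
      proof (rule ccontr)
        assume "\<not> ?thesis"
        then have "\<forall>i<L. u!i = u!0" by blast
        note all = this
        have "u = replicate L (u!0)"
        proof (rule nth_equalityI)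
          show "length u = length (replicate L (u!0))" using len by simp
          fix i assume i: "i < length u"
          then have e1: "u!i = u!0" using all len by blast
          have e2: "replicate L (u!0) ! i = u!0" using i len by simp
          show "u!i = replicate L (u!0) ! i" using e1 e2 by argo
        qed
        then show False using nc hd0 by simp
      qed
      then show ?thesis using that by blast
    qed
    have i01: "[u!0, u!1] \<in> S u" using inS[OF uC, of 0 1] L by simp
    show ?thesis
    proof (cases "u!0 = u!1")
      case True
      have "j \<noteq> 0"
      proof
        assume "j = 0" with j(2) show False by simp
      qed
      moreover have "j \<noteq> 1"
      proof
        assume "j = 1" with j(2) True show False by simp
      qed
      ultimately have "0 < j" by simp
      then have "[u!0, u!j] \<in> S u" using inS[OF uC, of 0 j] j by simp
      moreover have "[u!0, u!1] \<noteq> [u!0, u!j]" using j True by simp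
      ultimately show ?thesis using two_le_card[OF i01 _ _ fS] by blast
    next
      case False
      show ?thesis
      proof (cases "u!2 = u!1")
        case True
        have "[u!1, u!2] \<in> S u" using inS[OF uC, of 1 2] L by simp
        moreover have "[u!0, u!1] \<noteq> [u!1, u!2]" using False by simp
        ultimately show ?thesis using two_le_card[OF i01 _ _ fS] by blast
      next
        case F2: False
        have "[u!0, u!2] \<in> S u" using inS[OF uC, of 0 2] L by simp
        moreover have "[u!0, u!1] \<noteq> [u!0, u!2]" using F2 by simp
        ultimately show ?thesis using two_le_card[OF i01 _ _ fS] by blast
      qed
    qed
  qed
  have "(\<Sum>u\<in>C. card (S u)) = (\<Sum>u\<in>C0. card (S u)) + (\<Sum>u\<in>C - C0. card (S u))"
    using sum.subset_diff[OF C0C fC, of "\<lambda>u. card (S u)"] by (simp add: add.commute)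
  moreover have "(\<Sum>u\<in>C0. card (S u)) \<ge> (\<Sum>u\<in>C0. 1)" by (rule sum_mono) (use one C0C in auto)
  moreover have "(\<Sum>u\<in>C - C0. card (S u)) \<ge> (\<Sum>u\<in>C - C0. 2)" by (rule sum_mono) (use two in auto)
  ultimately have "card C0 + 2 * card (C - C0) \<le> q^2" using sumS by simp
  moreover have "card C = card C0 + card (C - C0)"
    using card_Diff_subset[OF finite_subset[OF C0C fC] C0C] card_mono[OF fC C0C] by simp
  ultimately show ?thesis using cardC0 by simp
qed

lemma subseq_set: "subseq w u \<Longrightarrow> set w \<subseteq> set u"
  by (induction rule: list_emb.induct) auto

lemma lcs_eq_len: "lcs_len u v = length u \<Longrightarrow> length u = length v \<Longrightarrow> u = v"
proof -
  assume a: "lcs_len u v = length u" "length u = length v"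
  obtain w where w: "subseq w u" "subseq w v" "length w = lcs_len u v" using lcs_wit by blast
  then have "w = u" using a subseq_same_length[of w u] by simp
  moreover have "w = v" using w a subseq_same_length[of w v] by simp
  ultimately show ?thesis by simp
qed

lemma fin_dists: "finite C \<Longrightarrow> finite {insdel_dist u v |u v. u \<in> C \<and> v \<in> C \<and> u \<noteq> v}"
  by (rule finite_subset[of _ "(\<lambda>(u,v). insdel_dist u v) ` (C \<times> C)"]) auto

lemma code_dist_le:
  assumes "C \<subseteq> words q n" "2 \<le> card C" "d \<le> code_insdel_dist C" "u\<in>C" "v\<in>C" "u\<noteq>v"
  shows "d \<le> 2*n - 2*lcs_len u v"
proof -
  have fC: "finite C" using assms(2) card.infinite by force
  have "code_insdel_dist C \<le> insdel_dist u v"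
    unfolding code_insdel_dist_def by (rule Min_le) (use fin_dists[OF fC] assms in auto)
  moreover have "length u = n" "length v = n" using assms unfolding words_def by auto
  ultimately show ?thesis using assms(3) unfolding insdel_dist_def by simp
qed

lemma dist_ge:
  assumes "finite C" "2 \<le> card C" "\<And>u v. u\<in>C \<Longrightarrow> v\<in>C \<Longrightarrow> u\<noteq>v \<Longrightarrow> d \<le> insdel_dist u v"
  shows "d \<le> code_insdel_dist C"
proof -
  obtain u where u: "u \<in> C" using assms(2) by fastforce
  have "card (C - {u}) \<ge> 1" using assms(1,2) u by simp
  then have "C - {u} \<noteq> {}" by (metis card.empty not_one_le_zero)
  then obtain v where v: "v \<in> C" "v \<noteq> u" by blast
  show ?thesis unfolding code_insdel_dist_def
    by (subst Min_ge_iff) (use fin_dists[OF assms(1)] u v assms(3) in auto)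
qed

lemma I_le:
  assumes "\<And>C. C \<subseteq> words q n \<Longrightarrow> 2 \<le> card C \<Longrightarrow> d \<le> code_insdel_dist C \<Longrightarrow> card C \<le> B"
    and "C0 \<subseteq> words q n" "2 \<le> card C0" "d \<le> code_insdel_dist C0"
  shows "I_q q n d \<le> B"
proof -
  have fin: "finite {card C | C. C \<subseteq> words q n \<and> 2 \<le> card C \<and> d \<le> code_insdel_dist C}"
    by (rule finite_subset[of _ "card ` Pow (words q n)"]) (auto simp: finite_words)
  show ?thesis unfolding I_q_def
    by (subst Max_le_iff) (use fin assms in auto)
qed

lemma I_ge:
  assumes "C \<subseteq> words q n" "2 \<le> card C" "d \<le> code_insdel_dist C"
  shows "card C \<le> I_q q n d"
proof -
  have fin: "finite {card C | C. C \<subseteq> words q n \<and> 2 \<le> card C \<and> d \<le> code_insdel_dist C}"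
    by (rule finite_subset[of _ "card ` Pow (words q n)"]) (auto simp: finite_words)
  show ?thesis unfolding I_q_def by (rule Max_ge) (use fin assms in auto)
qed

lemma const_code:
  assumes "q \<ge> 2" "n \<ge> 1" "d \<le> 2*n"
  defines "K \<equiv> (\<lambda>a. replicate n a) ` {1..q}"
  shows "K \<subseteq> words q n" "card K = q" "d \<le> code_insdel_dist K"
proof -
  show Kw: "K \<subseteq> words q n" unfolding K_def words_def by auto
  have "inj_on (\<lambda>a. replicate n a) {1..q}"
  proof (rule inj_onI)
    fix a b assume h: "replicate n a = replicate n b"
    then show "a = b" using assms(2) by (cases n) auto
  qed
  then show cK: "card K = q" unfolding K_def by (simp add: card_image)
  show "d \<le> code_insdel_dist K"
  proof (rule dist_ge)
    show "finite K" unfolding K_def by simp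
    show "2 \<le> card K" using cK assms by simp
    fix u v assume "u \<in> K" "v \<in> K" "u \<noteq> v"
    then obtain a b where ab: "u = replicate n a" "v = replicate n b" "a \<noteq> b" unfolding K_def by auto
    obtain w where w: "subseq w u" "subseq w v" "length w = lcs_len u v" using lcs_wit by blast
    have "set w \<subseteq> {a}" "set w \<subseteq> {b}" using subseq_set[OF w(1)] subseq_set[OF w(2)] ab by auto
    then have "w = []" using ab(3) by (cases w) auto
    then have "lcs_len u v = 0" using w by simp
    then show "d \<le> insdel_dist u v" unfolding insdel_dist_def using ab assms by simp
  qed
qed


lemma lcsb_of:
  assumes "C \<subseteq> words q n" "2 \<le> card C" "2*t \<le> code_insdel_dist C"
  shows "lcsb C (n - t)"
  unfolding lcsb_def
proof (intro ballI impI)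
  fix u v assume "u \<in> C" "v \<in> C" "u \<noteq> v"
  then have "2*t \<le> 2*n - 2*lcs_len u v" using code_dist_le[OF assms] by blast
  moreover have "lcs_len u v \<le> n" using lcs_le_len[of u v] \<open>u \<in> C\<close> assms(1) unfolding words_def by auto
  ultimately show "lcs_len u v \<le> n - t" by arith
qed

lemma partA: assumes "q \<ge> 2" "n \<ge> 1" shows "I_q q n 2 = q ^ n"
proof (rule antisym)
  have "q ^ n \<ge> q" using assms by (simp add: self_le_power)
  then have c2: "2 \<le> card (words q n)" using assms by (simp add: card_words)
  have d2: "2 \<le> code_insdel_dist (words q n)"
  proof (rule dist_ge[OF finite_words c2])
    fix u v assume "u \<in> words q n" "v \<in> words q n" "u \<noteq> v"
    then have l: "length u = n" "length v = n" unfolding words_def by auto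
    have "lcs_len u v \<le> n" using lcs_le_len[of u v] l by simp
    moreover have "lcs_len u v \<noteq> n" using lcs_eq_len[of u v] l \<open>u \<noteq> v\<close> by auto
    ultimately show "2 \<le> insdel_dist u v" unfolding insdel_dist_def using l by simp
  qed
  show "I_q q n 2 \<le> q ^ n"
    by (rule I_le[OF _ order.refl c2 d2]) (use card_mono[OF finite_words] card_words in metis)
  show "q ^ n \<le> I_q q n 2" using I_ge[OF order.refl c2 d2] by (simp add: card_words)
qed

lemma partB: assumes "q \<ge> 2" "n \<ge> 1" shows "I_q q n (2*n) = q"
proof (rule antisym)
  have K1: "replicate n ` {1..q} \<subseteq> words q n" and K2: "2 \<le> card (replicate n ` {1..q})"
    and K3: "2*n \<le> code_insdel_dist (replicate n ` {1..q})"
    using const_code[OF assms order.refl] assms(1) by auto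
  note K = K1 K2 K3
  show "I_q q n (2*n) \<le> q"
  proof (rule I_le[OF _ K])
    fix C assume C: "C \<subseteq> words q n" "2 \<le> card C" "2*n \<le> code_insdel_dist C"
    have "lcsb C (n - n)" by (rule lcsb_of[OF C])
    then show "card C \<le> q" using base_zero[OF C(1) assms(2)] by simp
  qed
  show "q \<le> I_q q n (2*n)" using I_ge[OF K] const_code(2)[OF assms order.refl] by simp
qed

lemma partC:
  assumes "q \<ge> 2" "2 \<le> t" "t + 1 \<le> n"
  shows "real (I_q q n (2*t)) \<le> (real q ^ (n - t + 1) + real q ^ (n - t)) / 2"
proof -
  define j where "j = n - t - 1"
  have nt: "n - t = 1 + j" using assms unfolding j_def by arith
  have n1: "n \<ge> 1" using assms by simp
  have dle: "2*t \<le> 2*n" using assms by simp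
  have K1: "replicate n ` {1..q} \<subseteq> words q n" and K2: "2 \<le> card (replicate n ` {1..q})"
    and K3: "2*t \<le> code_insdel_dist (replicate n ` {1..q})"
    using const_code[OF assms(1) n1 dle] assms(1) by auto
  note K = K1 K2 K3
  have "I_q q n (2*t) \<le> q^j * ((q^2+q) div 2)"
  proof (rule I_le[OF _ K])
    fix C assume C: "C \<subseteq> words q n" "2 \<le> card C" "2*t \<le> code_insdel_dist C"
    have lb: "lcsb C (1 + j)" using lcsb_of[OF C] nt by simp
    have Cw: "C \<subseteq> words q ((t + 1) + j)" using C(1) assms unfolding j_def by simp
    show "card C \<le> q^j * ((q^2+q) div 2)"
    proof (rule reduce[OF _ Cw lb])
      fix C' assume "C' \<subseteq> words q (t+1)" "lcsb C' 1"
      then have "2 * card C' \<le> q^2 + q" using base_pairs[of C' q "t+1"] assms by simp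
      then show "card C' \<le> (q^2+q) div 2" by simp
    qed
  qed
  then have "real (I_q q n (2*t)) \<le> real (q^j) * real ((q^2+q) div 2)" by (metis of_nat_le_iff of_nat_mult)
  also have "\<dots> \<le> real (q^j) * (real (q^2+q) / 2)"
  proof (rule mult_left_mono)
    have "2 * ((q^2+q) div 2) \<le> q^2+q" by simp
    then have "2 * real ((q^2+q) div 2) \<le> real (q^2+q)" by (metis of_nat_le_iff of_nat_mult of_nat_numeral)
    then show "real ((q^2+q) div 2) \<le> real (q^2+q) / 2" by simp
  qed simp
  also have "\<dots> = (real q ^ (j+2) + real q ^ (j+1)) / 2" by (simp add: power2_eq_square algebra_simps)
  finally have fin: "real (I_q q n (2*t)) \<le> (real q ^ (j+2) + real q ^ (j+1)) / 2" .
  have "j + 2 = n - t + 1" "j + 1 = n - t" using nt by auto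
  then show ?thesis using fin by simp
qed

lemma partD:
  assumes "q \<ge> 2" "q \<le> t" "t + 1 \<le> n"
  shows "I_q q n (2*t) \<le> q ^ (n - t)"
proof -
  define j where "j = n - t - 1"
  have nt: "n - t = 1 + j" using assms unfolding j_def by arith
  have n1: "n \<ge> 1" using assms by simp
  have dle: "2*t \<le> 2*n" using assms by simp
  have K1: "replicate n ` {1..q} \<subseteq> words q n" and K2: "2 \<le> card (replicate n ` {1..q})"
    and K3: "2*t \<le> code_insdel_dist (replicate n ` {1..q})"
    using const_code[OF assms(1) n1 dle] assms(1) by auto
  note K = K1 K2 K3
  have "I_q q n (2*t) \<le> q^j * q"
  proof (rule I_le[OF _ K])
    fix C assume C: "C \<subseteq> words q n" "2 \<le> card C" "2*t \<le> code_insdel_dist C"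
    have lb: "lcsb C (1 + j)" using lcsb_of[OF C] nt by simp
    have Cw: "C \<subseteq> words q ((t + 1) + j)" using C(1) assms unfolding j_def by simp
    show "card C \<le> q^j * q"
    proof (rule reduce[OF _ Cw lb])
      fix C' assume "C' \<subseteq> words q (t+1)" "lcsb C' 1"
      then show "card C' \<le> q" using base_rep[of C' q "t+1"] assms by simp
    qed
  qed
  also have "q^j * q = q ^ (n - t)" using nt by (simp add: power_Suc2)
  finally show ?thesis .
qed

theorem theorem3p6:
  fixes q n :: nat
  assumes "q \<ge> 2" and "n \<ge> 1"
  shows "(I_q q n 2 = q ^ n \<and> I_q q n (2 * n) = q)
    \<and> (\<forall>d. even d \<and> 4 \<le> d \<and> d \<le> 2 * n - 2 \<longrightarrow>
           real (I_q q n d) \<le> (real q ^ (n - d div 2 + 1) + real q ^ (n - d div 2)) / 2)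
    \<and> (\<forall>d. even d \<and> 2 * q \<le> d \<and> d \<le> 2 * n - 2 \<longrightarrow>
           I_q q n d \<le> q ^ (n - d div 2))"
proof (intro conjI allI impI)
  show "I_q q n 2 = q ^ n" using partA[OF assms] .
  show "I_q q n (2 * n) = q" using partB[OF assms] .
next
  fix d assume d: "even d \<and> 4 \<le> d \<and> d \<le> 2 * n - 2"
  then have e: "d = 2 * (d div 2)" by simp
  have "2 \<le> d div 2" "d div 2 + 1 \<le> n" using d by auto
  then show "real (I_q q n d) \<le> (real q ^ (n - d div 2 + 1) + real q ^ (n - d div 2)) / 2"
    using partC[OF assms(1), of "d div 2" n] e by simp
next
  fix d assume d: "even d \<and> 2 * q \<le> d \<and> d \<le> 2 * n - 2"
  then have e: "d = 2 * (d div 2)" by simp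
  have "q \<le> d div 2" "d div 2 + 1 \<le> n" using d e assms(1) by arith+
  then show "I_q q n d \<le> q ^ (n - d div 2)"
    using partD[OF assms(1), of "d div 2" n] e by simp
qed

end
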